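(* Let $n_{k'}\le n_k$. The restriction of $Z_{k,k'}$ to $\operatorname{ran}(Z_{k,k'}^*Z_{k,k'})$, and the restriction of $Z_{k,k'}^*$ to $E_{k'}$, are isometric isomorphisms between the subspaces $\operatorname{ran}(Z_{k,k'}^*Z_{k,k'})\subset E_k$ and $E_{k'}$ (in the respective directions).
   Context: Let $\mathcal H$ be a finite-dimensional complex Hilbert space and $E_k,E_{k'}$ mutually orthogonal subspaces with $n_k=\dim E_k$, $n_{k'}=\dim E_{k'}$ and orthonormal bases $\{|a_k\rangle:0\le a\le n_k-1\}$, $\{|b_{k'}\rangle:0\le b\le n_{k'}-1\}$. For vectors $x,y$, $|x\rangle\langle y|$ is the operator $u\mapsto\langle y,u\rangle x$. $\zeta_k=e^{2\pi i/n_k}$. The transition operator is $Z_{k,k'}=n_k^{-1/2}\sum_{b=0}^{n_{k'}-1}\sum_{a=0}^{n_k-1}\zeta_k^{ba}|b_{k'}\rangle\langle a_k|$ (an operator on $\mathcal H$). *)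

theory Defs
  imports "HOL-Analysis.Analysis"
begin

text \<open>The finite-dimensional complex Hilbert space H is modelled as complex^'n with
  the standard inner product (conjugate-linear in the first argument).\<close>

definition cinner :: "complex^'n \<Rightarrow> complex^'n \<Rightarrow> complex" where
  "cinner x y = (\<Sum>i\<in>UNIV. cnj (x $ i) * y $ i)"

definition cnorm :: "complex^'n \<Rightarrow> real" where
  "cnorm x = sqrt (Re (cinner x x))"

definition ketbra :: "complex^'n \<Rightarrow> complex^'n \<Rightarrow> complex^'n^'n" where
  "ketbra x y = (\<chi> i j. x $ i * cnj (y $ j))"

definition cadj :: "complex^'n^'n \<Rightarrow> complex^'n^'n" where
  "cadj A = (\<chi> i j. cnj (A $ j $ i))"

definition cspan_fam :: "(nat \<Rightarrow> complex^'n) \<Rightarrow> nat \<Rightarrow> (complex^'n) set" where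
  "cspan_fam e m = vec.span (e ` {..<m})"

definition orthonormal_fam :: "(nat \<Rightarrow> complex^'n) \<Rightarrow> nat \<Rightarrow> bool" where
  "orthonormal_fam e m \<longleftrightarrow>
     (\<forall>i<m. \<forall>j<m. cinner (e i) (e j) = (if i = j then 1 else 0))"

definition zeta :: "nat \<Rightarrow> complex" where
  "zeta m = exp (2 * of_real pi * \<i> / of_nat m)"

definition transition_op ::
  "(nat \<Rightarrow> complex^'n) \<Rightarrow> nat \<Rightarrow> (nat \<Rightarrow> complex^'n) \<Rightarrow> nat \<Rightarrow> complex^'n^'n" where
  "transition_op a nk b nk' =
     (\<chi> i j. of_real (1 / sqrt (real nk)) *
        (\<Sum>bi<nk'. \<Sum>ai<nk. zeta nk ^ (bi * ai) * ketbra (b bi) (a ai) $ i $ j))"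

definition isometric_iso :: "(complex^'n \<Rightarrow> complex^'n) \<Rightarrow> (complex^'n) set \<Rightarrow> (complex^'n) set \<Rightarrow> bool" where
  "isometric_iso T V W \<longleftrightarrow> bij_betw T V W \<and> (\<forall>x\<in>V. cnorm (T x) = cnorm x)"

end

theory Submission
  imports Defs
begin
lemma Zv: "transition_op a nk b nk' *v x =
  (\<Sum>bi<nk'. \<Sum>ai<nk. (of_real (1/sqrt nk) * zeta nk ^ (bi*ai) * cinner (a ai) x) *s b bi)"
  unfolding vec_eq_iff
proof
  fix i
  show "(transition_op a nk b nk' *v x) $ i = (\<Sum>bi<nk'. \<Sum>ai<nk. (of_real (1/sqrt nk) * zeta nk ^ (bi*ai) * cinner (a ai) x) *s b bi) $ i"
    by (simp add: matrix_vector_mult_def transition_op_def ketbra_def cinner_def sum_component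
       sum_distrib_left sum_distrib_right mult_ac sum.swap[of _ UNIV])
qed

lemma gen_adj: "cadj (\<chi> i j. (k::complex) * (\<Sum>p\<in>P. \<Sum>q\<in>Q. f p q * ((\<chi> i j. u p $ i * cnj (v q $ j)) $ i $ j))) *v y
   = (\<Sum>p\<in>P. \<Sum>q\<in>Q. (cnj k * cnj (f p q) * cinner (u p) y) *s v q)"
  unfolding vec_eq_iff
  by (simp add: matrix_vector_mult_def cadj_def cinner_def sum_component
       sum_distrib_left sum_distrib_right mult_ac sum.swap[of _ UNIV])

lemma Zadj: "cadj (transition_op a nk b nk') *v y =
  (\<Sum>bi<nk'. \<Sum>ai<nk. (of_real (1/sqrt nk) * cnj (zeta nk ^ (bi*ai)) * cinner (b bi) y) *s a ai)"
  unfolding transition_op_def ketbra_def gen_adj by simp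

lemma adj_inner: "cinner (cadj A *v x) y = cinner x (A *v y)"
proof -
  have "cinner (cadj A *v x) y = (\<Sum>i\<in>UNIV. \<Sum>j\<in>UNIV. cnj (x$j) * (A$j$i * y$i))"
    by (simp add: cinner_def cadj_def matrix_vector_mult_def sum_distrib_left sum_distrib_right mult_ac)
  also have "\<dots> = (\<Sum>j\<in>UNIV. \<Sum>i\<in>UNIV. cnj (x$j) * (A$j$i * y$i))" by (rule sum.swap)
  also have "\<dots> = cinner x (A *v y)"
    by (simp add: cinner_def matrix_vector_mult_def sum_distrib_left)
  finally show ?thesis .
qed
lemma zeta_prod:
  fixes n b c a :: nat
  defines "w \<equiv> exp (2 * of_real pi * \<i> * (of_int (int b - int c)) / of_nat n)"
  shows "zeta n ^ (b*a) * cnj (zeta n ^ (c*a)) = w ^ a"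
proof -
  define t where "t = 2 * of_real pi * \<i> / (of_nat n :: complex)"
  have cz: "cnj t = - t" by (simp add: t_def)
  have "zeta n ^ (b*a) = exp (of_nat (b*a) * t)" unfolding zeta_def t_def by (rule exp_of_nat_mult[symmetric])
  moreover have "cnj (zeta n ^ (c*a)) = exp (- (of_nat (c*a) * t))"
    unfolding zeta_def t_def by (simp add: exp_cnj exp_of_nat_mult[symmetric])
  moreover have "w ^ a = exp (of_nat a * (of_int (int b - int c) * t))"
    unfolding w_def t_def by (simp add: exp_of_nat_mult[symmetric] mult_ac)
  ultimately show ?thesis
    by (simp add: exp_add[symmetric] algebra_simps)
qed

lemma roots_orth:
  fixes n b c :: nat
  assumes "b < n" "c < n"
  shows "(\<Sum>a<n. zeta n ^ (b*a) * cnj (zeta n ^ (c*a))) = (if b = c then of_nat n else 0)"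
proof -
  define w where "w = exp (2 * of_real pi * \<i> * (of_int (int b - int c)) / (of_nat n :: complex))"
  have "(\<Sum>a<n. zeta n ^ (b*a) * cnj (zeta n ^ (c*a))) = (\<Sum>a<n. w ^ a)"
    unfolding w_def by (rule sum.cong[OF refl], rule zeta_prod)
  also have "\<dots> = (if b = c then of_nat n else 0)"
  proof (cases "b = c")
    case True then show ?thesis by (simp add: w_def)
  next
    case False
    have n0: "n > 0" using assms by simp
    have "w ^ n = exp (of_nat n * (2 * of_real pi * \<i> * (of_int (int b - int c)) / (of_nat n :: complex)))"
      unfolding w_def by (rule exp_of_nat_mult[symmetric])
    also have "\<dots> = exp (2 * of_real pi * \<i> * (of_int (int b - int c)))" using n0 by simp
    also have "\<dots> = 1" by (subst exp_eq_1) (auto intro!: exI[of _ "int b - int c"])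
    finally have wn: "w ^ n = 1" .
    have w1: "w \<noteq> 1"
    proof
      assume "w = 1"
      then obtain m :: int where m: "2 * pi * real_of_int (int b - int c) / real n = real_of_int (2 * m) * pi"
        unfolding w_def exp_eq_1 by auto
      hence "pi * (2 * real_of_int (int b - int c)) = pi * (2 * real_of_int (m * int n))" using n0 by (simp add: field_simps)
      hence "real_of_int (int b - int c) = real_of_int (m * int n)" by simp
      hence e: "int b - int c = m * int n" by linarith
      show False
      proof (cases "m = 0")
        case True then show False using e False by simp
      next
        case f: False
        hence "\<bar>m\<bar> \<ge> 1" by linarith
        hence "\<bar>m * int n\<bar> \<ge> int n" by (simp add: abs_mult mult_le_cancel_right1)
        thus False using e assms by linarith
      qed
    qed
    show ?thesis using False w1 wn by (simp add: geometric_sum)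
  qed
  finally show ?thesis .
qed

lemma cinner_sum_right: "cinner x (sum f S) = (\<Sum>s\<in>S. cinner x (f s))"
  by (simp add: cinner_def sum_component sum_distrib_left sum.swap[of _ UNIV])

lemma cinner_scale_right: "cinner x (c *s y) = c * cinner x y"
  by (simp add: cinner_def sum_distrib_left mult_ac)

lemma cinner_add_right: "cinner x (y + z) = cinner x y + cinner x z"
  by (simp add: cinner_def sum.distrib distrib_left)

lemma Zadj_base:
  assumes onb: "orthonormal_fam b nk'" and c: "c < nk'"
  shows "cadj (transition_op a nk b nk') *v b c =
    (\<Sum>ai<nk. (of_real (1/sqrt nk) * cnj (zeta nk ^ (c*ai))) *s a ai)"
proof -
  let ?g = "\<lambda>bi ai. (of_real (1/sqrt nk) * cnj (zeta nk ^ (bi*ai)) * cinner (b bi) (b c)) *s a ai"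
  have "cadj (transition_op a nk b nk') *v b c = (\<Sum>bi<nk'. \<Sum>ai<nk. ?g bi ai)" by (rule Zadj)
  also have "\<dots> = (\<Sum>bi<nk'. if bi = c then (\<Sum>ai<nk. (of_real (1/sqrt nk) * cnj (zeta nk ^ (c*ai))) *s a ai) else 0)"
    by (rule sum.cong[OF refl]) (use onb c in \<open>auto simp: orthonormal_fam_def\<close>)
  also have "\<dots> = (\<Sum>ai<nk. (of_real (1/sqrt nk) * cnj (zeta nk ^ (c*ai))) *s a ai)"
    using c by simp
  finally show ?thesis .
qed

lemma ZZadj_base:
  assumes ona: "orthonormal_fam a nk" and onb: "orthonormal_fam b nk'" and c: "c < nk'"
    and le: "nk' \<le> nk"
  shows "transition_op a nk b nk' *v (cadj (transition_op a nk b nk') *v b c) = b c"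
proof -
  let ?k = "complex_of_real (1/sqrt nk)"
  let ?y = "cadj (transition_op a nk b nk') *v b c"
  have n0: "nk > 0" using c le by simp
  have kr: "(1 / sqrt (real nk)) * (1 / sqrt (real nk)) * real nk = 1" using n0
    by (simp add: divide_simps)
  have kk: "?k * ?k * of_nat nk = 1"
  proof -
    have "?k * ?k * of_nat nk = complex_of_real ((1 / sqrt (real nk)) * (1 / sqrt (real nk)) * real nk)"
      by (simp only: of_real_mult of_real_of_nat_eq)
    thus ?thesis using kr by simp
  qed
  have ci: "cinner (a ai) ?y = ?k * cnj (zeta nk ^ (c*ai))" if "ai < nk" for ai
  proof -
    have "cinner (a ai) ?y = (\<Sum>aj<nk. ?k * cnj (zeta nk ^ (c*aj)) * cinner (a ai) (a aj))"
      by (simp add: Zadj_base[OF onb c] cinner_sum_right cinner_scale_right)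
    also have "\<dots> = (\<Sum>aj<nk. if aj = ai then ?k * cnj (zeta nk ^ (c*ai)) else 0)"
      by (rule sum.cong[OF refl]) (use ona that in \<open>auto simp: orthonormal_fam_def\<close>)
    also have "\<dots> = ?k * cnj (zeta nk ^ (c*ai))" using that by simp
    finally show ?thesis .
  qed
  have "transition_op a nk b nk' *v ?y =
     (\<Sum>bi<nk'. \<Sum>ai<nk. (?k * zeta nk ^ (bi*ai) * cinner (a ai) ?y) *s b bi)" by (rule Zv)
  also have "\<dots> = (\<Sum>bi<nk'. (\<Sum>ai<nk. ?k * ?k * (zeta nk ^ (bi*ai) * cnj (zeta nk ^ (c*ai)))) *s b bi)"
  proof (rule sum.cong[OF refl])
    fix bi assume "bi \<in> {..<nk'}"
    have "(\<Sum>ai<nk. (?k * zeta nk ^ (bi*ai) * cinner (a ai) ?y) *s b bi) =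
          (\<Sum>ai<nk. (?k * ?k * (zeta nk ^ (bi*ai) * cnj (zeta nk ^ (c*ai)))) *s b bi)"
    proof (rule sum.cong[OF refl])
      fix ai assume "ai \<in> {..<nk}"
      hence "cinner (a ai) ?y = ?k * cnj (zeta nk ^ (c*ai))" using ci by simp
      thus "(?k * zeta nk ^ (bi*ai) * cinner (a ai) ?y) *s b bi = (?k * ?k * (zeta nk ^ (bi*ai) * cnj (zeta nk ^ (c*ai)))) *s b bi"
        by (simp only: mult_ac)
    qed
    thus "(\<Sum>ai<nk. (?k * zeta nk ^ (bi*ai) * cinner (a ai) ?y) *s b bi) =
          (\<Sum>ai<nk. ?k * ?k * (zeta nk ^ (bi*ai) * cnj (zeta nk ^ (c*ai)))) *s b bi"
      by (simp only: vec.scale_sum_left)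
  qed
  also have "\<dots> = (\<Sum>bi<nk'. (if bi = c then 1 else 0) *s b bi)"
  proof (rule sum.cong[OF refl])
    fix bi assume bi: "bi \<in> {..<nk'}"
    have "bi < nk" using le bi by simp
    have "(\<Sum>ai<nk. ?k * ?k * (zeta nk ^ (bi*ai) * cnj (zeta nk ^ (c*ai)))) = ?k * ?k * (\<Sum>ai<nk. zeta nk ^ (bi*ai) * cnj (zeta nk ^ (c*ai)))"
      by (simp only: sum_distrib_left)
    also have "\<dots> = ?k * ?k * (if bi = c then of_nat nk else 0)"
      using c le `bi < nk` by (simp only: roots_orth)
    also have "\<dots> = (if bi = c then 1 else 0)"
      using kk by (cases "bi = c") (simp_all only: if_True if_False simp_thms mult_zero_right)
    finally show "(\<Sum>ai<nk. ?k * ?k * (zeta nk ^ (bi*ai) * cnj (zeta nk ^ (c*ai)))) *s b bi = (if bi = c then 1 else 0) *s b bi"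
      by simp
  qed
  also have "\<dots> = (\<Sum>bi<nk'. if bi = c then b bi else 0)"
    by (rule sum.cong[OF refl]) simp
  also have "\<dots> = b c" using c by simp
  finally show ?thesis .
qed


lemma ZZadj:
  assumes ona: "orthonormal_fam a nk" and onb: "orthonormal_fam b nk'" and le: "nk' \<le> nk"
    and y: "y \<in> cspan_fam b nk'"
  shows "transition_op a nk b nk' *v (cadj (transition_op a nk b nk') *v y) = y"
proof -
  let ?P = "\<lambda>y. transition_op a nk b nk' *v (cadj (transition_op a nk b nk') *v y) = y"
  have "y \<in> vec.span (b ` {..<nk'})" using y by (simp add: cspan_fam_def)
  thus ?thesis
  proof (induct rule: vec.span_induct)
    case base
    show ?case unfolding vec.subspace_def
      by (simp add: matrix_vector_right_distrib vector_scalar_commute)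
  next
    case (step x)
    then obtain c where "c < nk'" "x = b c" by auto
    thus ?case using ZZadj_base[OF ona onb _ le] by simp
  qed
qed

lemma Z_in_span: "transition_op a nk b nk' *v x \<in> cspan_fam b nk'"
  unfolding Zv cspan_fam_def
  by (intro vec.span_sum vec.span_scale vec.span_base) auto

lemma Zadj_in_span: "cadj (transition_op a nk b nk') *v x \<in> cspan_fam a nk"
  unfolding Zadj cspan_fam_def
  by (intro vec.span_sum vec.span_scale vec.span_base) auto

theorem proposition2p6:
  fixes a b :: "nat \<Rightarrow> complex^'n" and nk nk' :: nat
  assumes "orthonormal_fam a nk" and "orthonormal_fam b nk'"
    and "\<forall>x\<in>cspan_fam a nk. \<forall>y\<in>cspan_fam b nk'. cinner x y = 0"
    and "nk' \<le> nk"
  shows "range (\<lambda>x. (cadj (transition_op a nk b nk') ** transition_op a nk b nk') *v x)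
           \<subseteq> cspan_fam a nk
       \<and> isometric_iso (\<lambda>x. transition_op a nk b nk' *v x)
           (range (\<lambda>x. (cadj (transition_op a nk b nk') ** transition_op a nk b nk') *v x))
           (cspan_fam b nk')
       \<and> isometric_iso (\<lambda>x. cadj (transition_op a nk b nk') *v x)
           (cspan_fam b nk')
           (range (\<lambda>x. (cadj (transition_op a nk b nk') ** transition_op a nk b nk') *v x))"
proof -
  define Z where "Z = transition_op a nk b nk'"
  define A where "A = cadj Z"
  define B where "B = cspan_fam b nk'"
  have ZA: "Z *v (A *v y) = y" if "y \<in> B" for y
    using ZZadj[OF assms(1,2,4)] that unfolding Z_def A_def B_def by blast
  have ZB: "Z *v x \<in> B" for x unfolding Z_def B_def by (rule Z_in_span)
  have R: "range (\<lambda>x. (A ** Z) *v x) = (\<lambda>y. A *v y) ` B"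
  proof
    show "range (\<lambda>x. (A ** Z) *v x) \<subseteq> (\<lambda>y. A *v y) ` B"
      using ZB by (auto simp: matrix_vector_mul_assoc[symmetric])
    show "(\<lambda>y. A *v y) ` B \<subseteq> range (\<lambda>x. (A ** Z) *v x)"
    proof
      fix x assume "x \<in> (\<lambda>y. A *v y) ` B"
      then obtain y where y: "y \<in> B" "x = A *v y" by auto
      hence "x = (A ** Z) *v (A *v y)" using ZA by (simp add: matrix_vector_mul_assoc[symmetric])
      thus "x \<in> range (\<lambda>x. (A ** Z) *v x)" by auto
    qed
  qed
  have nrm: "cnorm (A *v y) = cnorm y" if "y \<in> B" for y
  proof -
    have "cinner (A *v y) (A *v y) = cinner y (Z *v (A *v y))"
      unfolding A_def by (rule adj_inner)
    thus ?thesis using ZA[OF that] by (simp add: cnorm_def)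
  qed
  have injA: "inj_on (\<lambda>y. A *v y) B"
    by (rule inj_onI) (metis ZA)
  have 1: "range (\<lambda>x. (A ** Z) *v x) \<subseteq> cspan_fam a nk"
    using Zadj_in_span[of a nk b nk'] by (auto simp: A_def Z_def matrix_vector_mul_assoc[symmetric])
  have 2: "isometric_iso (\<lambda>x. Z *v x) (range (\<lambda>x. (A ** Z) *v x)) B"
    unfolding isometric_iso_def R bij_betw_def
  proof (intro conjI ballI)
    show "inj_on (\<lambda>x. Z *v x) ((\<lambda>y. A *v y) ` B)"
      by (rule inj_onI) (auto simp: ZA)
    show "(\<lambda>x. Z *v x) ` (\<lambda>y. A *v y) ` B = B"
      using ZA by (force simp: image_image)
    fix x assume "x \<in> (\<lambda>y. A *v y) ` B"
    then obtain y where "y \<in> B" "x = A *v y" by auto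
    thus "cnorm (Z *v x) = cnorm x" using ZA nrm by simp
  qed
  have 3: "isometric_iso (\<lambda>x. A *v x) B (range (\<lambda>x. (A ** Z) *v x))"
    unfolding isometric_iso_def R bij_betw_def using injA nrm by auto
  show ?thesis using 1 2 3 unfolding A_def Z_def B_def by blast
qed

end
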